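(* There exist a finite atom set $\Phi$, a finite agent set $I$, a logic $\Lambda$, an $\boldsymbol{\mathcal{L}}_\Lambda$ modal space $\boldsymbol{X}$ and a clean map $\boldsymbol{f}$ on $\boldsymbol{X}$ induced by a finite, Boolean multi-pointed action model that is not static, such that $\boldsymbol{f}$ exhibits nontrivial recurrence (with respect to the Stone topology): there is $\boldsymbol{x}\in\boldsymbol{X}$ whose orbit $\mathcal{O}_{\boldsymbol{f}}(\boldsymbol{x})$ is not periodic and contains a recurrent point.
   Context: Setting: atom set $\Phi$, finite agent set $I$, modal language $\mathcal{L}$ ($\varphi::=\top\mid p\mid\neg\varphi\mid\varphi\wedge\varphi\mid\square_i\varphi$), logic $\Lambda$ a normal modal logic extending $K$, $\boldsymbol{\mathcal{L}}_\Lambda$ the set of $\Lambda$-equivalence classes of formulas. For a set $X$ of pointed Kripke models (countable nonempty state sets, standard semantics), the modal space is $\boldsymbol{X}=\{\boldsymbol{x}:x\in X\}$, $\boldsymbol{x}=\{y\in X:y,x\text{ satisfy the same formulas}\}$, with the Stone topology generated by the sets $\{\boldsymbol{x}:x\vDash\varphi\}$. Clean map: induced via product update $x\mapsto x\otimes\Sigma\Gamma$ by a multi-pointed action model $\Sigma\Gamma=(\llbracket\Sigma\rrbracket,\mathsf{R},pre,post,\Gamma)$ (countable action set, relations $\mathsf{R}_i$, preconditions in $\mathcal{L}$, postconditions $\top$ or conjunctions of literals over $\Phi$, designated set $\emptyset\ne\Gamma\subseteq\llbracket\Sigma\rrbracket$) that is precondition finite, exhaustive, deterministic and closing over $X$ (every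 $x\in X$ satisfies $pre(\sigma)$ for exactly one $\sigma\in\Gamma$, finitely many preconditions up to equivalence, and $x\otimes\Sigma\Gamma\in X$). Product update: states $(s,\sigma)$ with $Ms\vDash pre(\sigma)$, relations componentwise, $p$ true at $(s,\sigma)$ iff $post(\sigma)\vDash p$, or $s\in\llbracket p\rrbracket$ and $post(\sigma)\nvDash\neg p$; designated state $(s,\sigma)$ for the applicable $\sigma\in\Gamma$. $\boldsymbol{f}(\boldsymbol{x})$ is the class of $x\otimes\Sigma\Gamma$. $\Sigma\Gamma$ is finite if $\llbracket\Sigma\rrbracket$ is finite, Boolean if every precondition is a Boolean (modality-free) formula, static if every postcondition is $\top$. Orbit: $\mathcal{O}_{\boldsymbol{f}}(\boldsymbol{x})=\{\boldsymbol{f}^n(\boldsymbol{x}):n\in\mathbb{N}_0\}$; it is periodic if $\boldsymbol{f}^{n+k}(\boldsymbol{x})=\boldsymbol{f}^n(\boldsymbol{x})$ for some $n\ge0,k>0$. The limit set $\omega_{\boldsymbol{f}}(\boldsymbol{y})$ is the set of limits of convergent subsequences $\boldsymbol{f}^{n_1}(\boldsymbol{y}),\boldsymbol{f}^{n_2}(\boldsymbol{y}),\dots$ ($n_1<n_2<\cdots$); $\boldsymbol{y}$ is recurrent if $\boldsymbol{y}\in\omega_{\boldsymbol{f}}(\boldsymbol{y})$. *)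

theory Defs
  imports "HOL-Analysis.Analysis"
begin

datatype fm = Top | Atom nat | Neg fm | Conj fm fm | Box nat fm

definition Imp :: "fm \<Rightarrow> fm \<Rightarrow> fm" where
  "Imp a b = Neg (Conj a (Neg b))"

fun wf_fm :: "nat set \<Rightarrow> nat set \<Rightarrow> fm \<Rightarrow> bool" where
  "wf_fm Phi I Top = True"
| "wf_fm Phi I (Atom p) = (p \<in> Phi)"
| "wf_fm Phi I (Neg a) = wf_fm Phi I a"
| "wf_fm Phi I (Conj a b) = (wf_fm Phi I a \<and> wf_fm Phi I b)"
| "wf_fm Phi I (Box i a) = (i \<in> I \<and> wf_fm Phi I a)"

fun boolean_fm :: "fm \<Rightarrow> bool" where
  "boolean_fm Top = True"
| "boolean_fm (Atom p) = True"
| "boolean_fm (Neg a) = boolean_fm a"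
| "boolean_fm (Conj a b) = (boolean_fm a \<and> boolean_fm b)"
| "boolean_fm (Box i a) = False"

text \<open>States live in a countable universe closed under the pairing used by product update.\<close>
datatype state = Base nat | Upd state nat

record kmodel =
  W :: "state set"
  R :: "nat \<Rightarrow> (state \<times> state) set"
  V :: "nat \<Rightarrow> state set"

type_synonym pmodel = "kmodel \<times> state"

definition wf_pmodel :: "pmodel \<Rightarrow> bool" where
  "wf_pmodel x = (let M = fst x in snd x \<in> W M \<and> (\<forall>i. R M i \<subseteq> W M \<times> W M) \<and> (\<forall>p. V M p \<subseteq> W M))"

fun sat :: "kmodel \<Rightarrow> state \<Rightarrow> fm \<Rightarrow> bool" where
  "sat M s Top = True"
| "sat M s (Atom p) = (s \<in> V M p)"
| "sat M s (Neg a) = (\<not> sat M s a)"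
| "sat M s (Conj a b) = (sat M s a \<and> sat M s b)"
| "sat M s (Box i a) = (\<forall>t. (s, t) \<in> R M i \<longrightarrow> sat M t a)"

definition psat :: "pmodel \<Rightarrow> fm \<Rightarrow> bool" where
  "psat x a = sat (fst x) (snd x) a"

definition entails :: "fm \<Rightarrow> fm \<Rightarrow> bool" where
  "entails a b = (\<forall>x. wf_pmodel x \<longrightarrow> psat x a \<longrightarrow> psat x b)"

fun pv :: "(fm \<Rightarrow> bool) \<Rightarrow> fm \<Rightarrow> bool" where
  "pv v Top = True"
| "pv v (Atom p) = v (Atom p)"
| "pv v (Neg a) = (\<not> pv v a)"
| "pv v (Conj a b) = (pv v a \<and> pv v b)"
| "pv v (Box i a) = v (Box i a)"

definition tautology :: "fm \<Rightarrow> bool" where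
  "tautology a = (\<forall>v. pv v a)"

fun subst_fm :: "(nat \<Rightarrow> fm) \<Rightarrow> fm \<Rightarrow> fm" where
  "subst_fm g Top = Top"
| "subst_fm g (Atom p) = g p"
| "subst_fm g (Neg a) = Neg (subst_fm g a)"
| "subst_fm g (Conj a b) = Conj (subst_fm g a) (subst_fm g b)"
| "subst_fm g (Box i a) = Box i (subst_fm g a)"

definition normal_logic :: "nat set \<Rightarrow> nat set \<Rightarrow> fm set \<Rightarrow> bool" where
  "normal_logic Phi I Lam =
    ((\<forall>a\<in>Lam. wf_fm Phi I a)
     \<and> (\<forall>a. wf_fm Phi I a \<and> tautology a \<longrightarrow> a \<in> Lam)
     \<and> (\<forall>i a b. i \<in> I \<and> wf_fm Phi I a \<and> wf_fm Phi I b \<longrightarrow>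
            Imp (Box i (Imp a b)) (Imp (Box i a) (Box i b)) \<in> Lam)
     \<and> (\<forall>a b. a \<in> Lam \<and> Imp a b \<in> Lam \<longrightarrow> b \<in> Lam)
     \<and> (\<forall>i a. i \<in> I \<and> a \<in> Lam \<longrightarrow> Box i a \<in> Lam)
     \<and> (\<forall>g a. a \<in> Lam \<and> (\<forall>p\<in>Phi. wf_fm Phi I (g p)) \<longrightarrow> subst_fm g a \<in> Lam))"

definition modal_space_of :: "nat set \<Rightarrow> nat set \<Rightarrow> fm set \<Rightarrow> pmodel set \<Rightarrow> bool" where
  "modal_space_of Phi I Lam X = (\<forall>x\<in>X. wf_pmodel x \<and> (\<forall>a\<in>Lam. psat x a))"

definition cls :: "nat set \<Rightarrow> nat set \<Rightarrow> pmodel set \<Rightarrow> pmodel \<Rightarrow> pmodel set" where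
  "cls Phi I X x = {y \<in> X. \<forall>a. wf_fm Phi I a \<longrightarrow> (psat y a \<longleftrightarrow> psat x a)}"

definition mspace :: "nat set \<Rightarrow> nat set \<Rightarrow> pmodel set \<Rightarrow> pmodel set set" where
  "mspace Phi I X = cls Phi I X ` X"

definition stone_top :: "nat set \<Rightarrow> nat set \<Rightarrow> pmodel set \<Rightarrow> pmodel set topology" where
  "stone_top Phi I X =
     topology_generated_by {{cls Phi I X x | x. x \<in> X \<and> psat x a} | a. wf_fm Phi I a}"

record amodel =
  Acts :: "nat set"
  ARel :: "nat \<Rightarrow> (nat \<times> nat) set"
  pre  :: "nat \<Rightarrow> fm"
  post :: "nat \<Rightarrow> fm"
  Des  :: "nat set"

fun is_literal :: "nat set \<Rightarrow> fm \<Rightarrow> bool" where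
  "is_literal Phi (Atom p) = (p \<in> Phi)"
| "is_literal Phi (Neg (Atom p)) = (p \<in> Phi)"
| "is_literal Phi _ = False"

inductive lit_conj :: "nat set \<Rightarrow> fm \<Rightarrow> bool" for Phi where
  "is_literal Phi a \<Longrightarrow> lit_conj Phi a"
| "lit_conj Phi a \<Longrightarrow> lit_conj Phi b \<Longrightarrow> lit_conj Phi (Conj a b)"

definition wf_amodel :: "nat set \<Rightarrow> nat set \<Rightarrow> amodel \<Rightarrow> bool" where
  "wf_amodel Phi I S =
    (countable (Acts S)
     \<and> (\<forall>i. ARel S i \<subseteq> Acts S \<times> Acts S)
     \<and> (\<forall>\<sigma>\<in>Acts S. wf_fm Phi I (pre S \<sigma>))
     \<and> (\<forall>\<sigma>\<in>Acts S. post S \<sigma> = Top \<or> lit_conj Phi (post S \<sigma>))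
     \<and> Des S \<noteq> {} \<and> Des S \<subseteq> Acts S)"

definition prod_model :: "kmodel \<Rightarrow> amodel \<Rightarrow> kmodel" where
  "prod_model M S =
    (let Wn = {Upd s \<sigma> | s \<sigma>. s \<in> W M \<and> \<sigma> \<in> Acts S \<and> sat M s (pre S \<sigma>)} in
     \<lparr> W = Wn,
       R = (\<lambda>i. {(Upd s \<sigma>, Upd t \<tau>) | s \<sigma> t \<tau>.
                   Upd s \<sigma> \<in> Wn \<and> Upd t \<tau> \<in> Wn \<and> (s, t) \<in> R M i \<and> (\<sigma>, \<tau>) \<in> ARel S i}),
       V = (\<lambda>p. {Upd s \<sigma> | s \<sigma>. Upd s \<sigma> \<in> Wn \<and>
                   (entails (post S \<sigma>) (Atom p) \<or>
                    (s \<in> V M p \<and> \<not> entails (post S \<sigma>) (Neg (Atom p))))}) \<rparr>)"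

definition prod_update :: "pmodel \<Rightarrow> amodel \<Rightarrow> pmodel" where
  "prod_update x S =
    (prod_model (fst x) S, Upd (snd x) (THE \<sigma>. \<sigma> \<in> Des S \<and> psat x (pre S \<sigma>)))"

definition precondition_finite :: "amodel \<Rightarrow> bool" where
  "precondition_finite S =
     finite ((\<lambda>\<sigma>. {b. entails b (pre S \<sigma>) \<and> entails (pre S \<sigma>) b}) ` Acts S)"

definition exhaustive_deterministic :: "pmodel set \<Rightarrow> amodel \<Rightarrow> bool" where
  "exhaustive_deterministic X S = (\<forall>x\<in>X. \<exists>!\<sigma>. \<sigma> \<in> Des S \<and> psat x (pre S \<sigma>))"

definition closing :: "pmodel set \<Rightarrow> amodel \<Rightarrow> bool" where
  "closing X S = (\<forall>x\<in>X. prod_update x S \<in> X)"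

definition clean_action_model :: "nat set \<Rightarrow> nat set \<Rightarrow> pmodel set \<Rightarrow> amodel \<Rightarrow> bool" where
  "clean_action_model Phi I X S =
     (wf_amodel Phi I S \<and> precondition_finite S \<and> exhaustive_deterministic X S \<and> closing X S)"

definition finite_am :: "amodel \<Rightarrow> bool" where
  "finite_am S = finite (Acts S)"

definition boolean_am :: "amodel \<Rightarrow> bool" where
  "boolean_am S = (\<forall>\<sigma>\<in>Acts S. boolean_fm (pre S \<sigma>))"

definition static_am :: "amodel \<Rightarrow> bool" where
  "static_am S = (\<forall>\<sigma>\<in>Acts S. post S \<sigma> = Top)"

definition clean_map :: "nat set \<Rightarrow> nat set \<Rightarrow> pmodel set \<Rightarrow> amodel \<Rightarrow> pmodel set \<Rightarrow> pmodel set" where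
  "clean_map Phi I X S c = cls Phi I X (prod_update (SOME x. x \<in> c) S)"

definition periodic_orbit :: "('a \<Rightarrow> 'a) \<Rightarrow> 'a \<Rightarrow> bool" where
  "periodic_orbit f x = (\<exists>n k. k > 0 \<and> (f ^^ (n + k)) x = (f ^^ n) x)"

definition omega_limit :: "'a topology \<Rightarrow> ('a \<Rightarrow> 'a) \<Rightarrow> 'a \<Rightarrow> 'a set" where
  "omega_limit T f y =
     {l. \<exists>r. strict_mono r \<and> limitin T (\<lambda>j. (f ^^ (r j)) y) l sequentially}"

definition recurrent :: "'a topology \<Rightarrow> ('a \<Rightarrow> 'a) \<Rightarrow> 'a \<Rightarrow> bool" where
  "recurrent T f y = (y \<in> omega_limit T f y)"

definition orbit :: "('a \<Rightarrow> 'a) \<Rightarrow> 'a \<Rightarrow> 'a set" where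
  "orbit f x = {(f ^^ n) x | n. True}"

end

theory Submission
  imports Defs
begin


lemma pv_sat: "pv (\<lambda>b. sat M s b) a = sat M s a"
  by (induction a) auto

lemma sat_Imp[simp]: "sat M s (Imp a b) = (sat M s a \<longrightarrow> sat M s b)"
  by (simp add: Imp_def)

lemma wf_Imp[simp]: "wf_fm Phi I (Imp a b) = (wf_fm Phi I a \<and> wf_fm Phi I b)"
  by (simp add: Imp_def)

definition Valid :: "nat set \<Rightarrow> nat set \<Rightarrow> fm set" where
  "Valid Phi I = {a. wf_fm Phi I a \<and> (\<forall>x. wf_pmodel x \<longrightarrow> psat x a)}"

lemma subst_lemma:
  assumes "\<forall>i. R M i \<subseteq> W M \<times> W M" "t \<in> W M"
  shows "sat (M\<lparr>V := \<lambda>p. {u \<in> W M. sat M u (g p)}\<rparr>) t a = sat M t (subst_fm g a)"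
  using assms(2)
proof (induction a arbitrary: t)
  case (Box i a)
  then show ?case using assms(1) by auto
qed auto

lemma wf_subst: "wf_fm Phi I a \<Longrightarrow> \<forall>p\<in>Phi. wf_fm Phi I (g p) \<Longrightarrow> wf_fm Phi I (subst_fm g a)"
  by (induction a) auto

lemma normal_Valid: "normal_logic Phi I (Valid Phi I)"
  unfolding normal_logic_def
proof (intro conjI allI impI ballI)
  show "\<And>a. a \<in> Valid Phi I \<Longrightarrow> wf_fm Phi I a" by (simp add: Valid_def)
  show "\<And>a. wf_fm Phi I a \<and> tautology a \<Longrightarrow> a \<in> Valid Phi I"
  proof -
    fix a assume h: "wf_fm Phi I a \<and> tautology a"
    have "sat (fst x) (snd x) a" for x
    proof -
      have "pv (\<lambda>b. sat (fst x) (snd x) b) a" using h unfolding tautology_def by blast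
      then show ?thesis by (simp only: pv_sat)
    qed
    then show "a \<in> Valid Phi I" using h unfolding Valid_def psat_def by blast
  qed
  show "\<And>i a b. i \<in> I \<and> wf_fm Phi I a \<and> wf_fm Phi I b \<Longrightarrow>
       Imp (Box i (Imp a b)) (Imp (Box i a) (Box i b)) \<in> Valid Phi I"
    by (auto simp: Valid_def psat_def)
  show "\<And>a b. a \<in> Valid Phi I \<and> Imp a b \<in> Valid Phi I \<Longrightarrow> b \<in> Valid Phi I"
    by (auto simp: Valid_def psat_def)
  show "\<And>i a. i \<in> I \<and> a \<in> Valid Phi I \<Longrightarrow> Box i a \<in> Valid Phi I"
  proof -
    fix i a assume h: "i \<in> I \<and> a \<in> Valid Phi I"
    show "Box i a \<in> Valid Phi I"
      unfolding Valid_def psat_def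
    proof (intro CollectI conjI allI impI)
      show "wf_fm Phi I (Box i a)" using h by (simp add: Valid_def)
      fix x :: pmodel assume wx: "wf_pmodel x"
      show "sat (fst x) (snd x) (Box i a)"
      proof (simp, intro allI impI)
        fix t assume "(snd x, t) \<in> R (fst x) i"
        hence "wf_pmodel (fst x, t)" using wx unfolding wf_pmodel_def Let_def by auto
        thus "sat (fst x) t a" using h unfolding Valid_def psat_def by auto
      qed
    qed
  qed
  show "\<And>g a. a \<in> Valid Phi I \<and> (\<forall>p\<in>Phi. wf_fm Phi I (g p)) \<Longrightarrow> subst_fm g a \<in> Valid Phi I"
  proof -
    fix g a assume h: "a \<in> Valid Phi I \<and> (\<forall>p\<in>Phi. wf_fm Phi I (g p))"
    show "subst_fm g a \<in> Valid Phi I"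
      unfolding Valid_def psat_def
    proof (intro CollectI conjI allI impI)
      show "wf_fm Phi I (subst_fm g a)" using h wf_subst by (auto simp: Valid_def)
      fix x :: pmodel assume wx: "wf_pmodel x"
      let ?M = "(fst x)\<lparr>V := \<lambda>p. {u \<in> W (fst x). sat (fst x) u (g p)}\<rparr>"
      have "wf_pmodel (?M, snd x)" using wx unfolding wf_pmodel_def Let_def by auto
      hence "sat ?M (snd x) a" using h unfolding Valid_def psat_def by auto
      thus "sat (fst x) (snd x) (subst_fm g a)"
        using subst_lemma[of "fst x" "snd x" g a] wx unfolding wf_pmodel_def Let_def by auto
    qed
  qed
qed

lemma limitin_gen:
  assumes "l \<in> \<Union>B" "\<And>b. b \<in> B \<Longrightarrow> l \<in> b \<Longrightarrow> eventually (\<lambda>x. f x \<in> b) F"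
  shows "limitin (topology_generated_by B) f l F"
  unfolding limitin_def openin_topology_generated_by_iff
proof (intro conjI allI impI)
  show "l \<in> topspace (topology_generated_by B)" using assms(1) by simp
  fix U assume "generate_topology_on B U \<and> l \<in> U"
  then have "generate_topology_on B U" "l \<in> U" by auto
  then show "eventually (\<lambda>x. f x \<in> U) F"
  proof (induction rule: generate_topology_on.induct)
    case (Int a b) then show ?case by (auto intro: eventually_conj)
  next
    case (UN K) then obtain k where "k \<in> K" "l \<in> k" by auto
    with UN.IH have "eventually (\<lambda>x. f x \<in> k) F" by blast
    then show ?case by (rule eventually_mono) (use \<open>k \<in> K\<close> in blast)
  next
    case (Basis s) then show ?case using assms(2) by auto
  qed auto
qed



definition S0 :: amodel where
  "S0 = \<lparr>Acts = {0,1,2}, ARel = (\<lambda>i. {(1,0),(1,1),(0,2),(2,2)}),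
         pre = (\<lambda>\<sigma>. if \<sigma> = 0 then Neg (Atom 0) else if \<sigma> = 1 then Atom 0 else Top),
         post = (\<lambda>\<sigma>. if \<sigma> = 0 then Atom 0 else if \<sigma> = 1 then Neg (Atom 0) else Top),
         Des = {0,1}\<rparr>"

definition pt :: "nat set \<Rightarrow> pmodel" where
  "pt Q = (\<lparr>W = {Base 0}, R = (\<lambda>i. {}), V = (\<lambda>q. if q \<in> Q then {Base 0} else {})\<rparr>, Base 0)"

lemma wf_pt: "wf_pmodel (pt Q)" by (simp add: pt_def wf_pmodel_def)

lemma ent_cex: "wf_pmodel x \<Longrightarrow> psat x a \<Longrightarrow> \<not> psat x b \<Longrightarrow> \<not> entails a b"
  unfolding entails_def by blast

lemma ent1: "entails (Atom 0) (Atom p) = (p = 0)"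
proof
  assume "entails (Atom 0) (Atom p)"
  then show "p = 0" using ent_cex[OF wf_pt[of "{0}"], of "Atom 0" "Atom p"] by (cases "p = 0") (auto simp: pt_def psat_def)
qed (auto simp: entails_def psat_def)

lemma ent2: "\<not> entails (Neg (Atom 0)) (Atom p)"
  by (rule ent_cex[OF wf_pt[of "{}"]]) (auto simp: pt_def psat_def)
lemma ent3: "\<not> entails Top (Atom p)"
  by (rule ent_cex[OF wf_pt[of "{}"]]) (auto simp: pt_def psat_def)
lemma ent4: "\<not> entails (Atom 0) (Neg (Atom p))"
  by (rule ent_cex[OF wf_pt[of "{0,p}"]]) (auto simp: pt_def psat_def)
lemma ent5: "entails (Neg (Atom 0)) (Neg (Atom p)) = (p = 0)"
proof
  assume "entails (Neg (Atom 0)) (Neg (Atom p))"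
  then show "p = 0" using ent_cex[OF wf_pt[of "{p}"], of "Neg (Atom 0)" "Neg (Atom p)"] by (cases "p = 0") (auto simp: pt_def psat_def)
qed (auto simp: entails_def psat_def)
lemma ent6: "\<not> entails Top (Neg (Atom p))"
  by (rule ent_cex[OF wf_pt[of "{p}"]]) (auto simp: pt_def psat_def)

fun chsat :: "(nat \<Rightarrow> bool) \<Rightarrow> nat \<Rightarrow> fm \<Rightarrow> bool" where
  "chsat \<beta> k Top = True"
| "chsat \<beta> k (Atom p) = (p = 0 \<and> \<beta> k)"
| "chsat \<beta> k (Neg a) = (\<not> chsat \<beta> k a)"
| "chsat \<beta> k (Conj a b) = (chsat \<beta> k a \<and> chsat \<beta> k b)"
| "chsat \<beta> k (Box i a) = chsat \<beta> (Suc k) a"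

definition rep :: "pmodel \<Rightarrow> (nat \<Rightarrow> bool) \<Rightarrow> bool" where
  "rep x \<beta> = (\<exists>e. e 0 = snd x \<and> (\<forall>k. e k \<in> W (fst x)) \<and>
      (\<forall>i k t. (e k, t) \<in> R (fst x) i \<longleftrightarrow> t = e (Suc k)) \<and>
      (\<forall>p k. e k \<in> V (fst x) p \<longleftrightarrow> (p = 0 \<and> \<beta> k)))"

lemma rep_sat:
  assumes "rep x \<beta>" shows "psat x a = chsat \<beta> 0 a"
proof -
  from assms[unfolded rep_def] obtain e where
    ee: "e 0 = snd x \<and> (\<forall>k. e k \<in> W (fst x)) \<and> (\<forall>i k t. (e k, t) \<in> R (fst x) i \<longleftrightarrow> t = e (Suc k)) \<and>
      (\<forall>p k. e k \<in> V (fst x) p \<longleftrightarrow> (p = 0 \<and> \<beta> k))" by (rule exE)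
  note e = ee[THEN conjunct1] ee[THEN conjunct2, THEN conjunct1] ee[THEN conjunct2, THEN conjunct2, THEN conjunct1]
     ee[THEN conjunct2, THEN conjunct2, THEN conjunct2]
  have "sat (fst x) (e k) a = chsat \<beta> k a" for k
  proof (induction a arbitrary: k)
    case (Box i a)
    have "\<forall>t. (e k, t) \<in> R (fst x) i \<longleftrightarrow> t = e (Suc k)" using e(3) by blast
    then show ?case using Box.IH by simp
  qed (simp_all add: e(4))
  from this[of 0] show ?thesis using e(1) by (simp add: psat_def)
qed

definition act :: "(nat \<Rightarrow> bool) \<Rightarrow> nat \<Rightarrow> nat" where
  "act \<beta> k = (if (\<forall>j<k. \<beta> j) then (if \<beta> k then 1 else 0) else 2)"

definition incr :: "(nat \<Rightarrow> bool) \<Rightarrow> nat \<Rightarrow> bool" where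
  "incr \<beta> k = (\<beta> k \<noteq> (\<forall>j<k. \<beta> j))"

lemma act_succ:
  "(\<tau> \<in> {0,1,2} \<and> (if \<tau> = 0 then \<not> \<beta> (Suc k) else if \<tau> = 1 then \<beta> (Suc k) else True)
     \<and> (act \<beta> k, \<tau>) \<in> {(1,0),(1,1),(0,2),(2,2)}) \<longleftrightarrow> \<tau> = act \<beta> (Suc k)"
  unfolding act_def by (auto simp: less_Suc_eq)

lemma rep_step:
  assumes "rep x \<beta>" shows "rep (prod_update x S0) (incr \<beta>)"
proof -
  from assms[unfolded rep_def] obtain e where
    ee: "e 0 = snd x \<and> (\<forall>k. e k \<in> W (fst x)) \<and> (\<forall>i k t. (e k, t) \<in> R (fst x) i \<longleftrightarrow> t = e (Suc k)) \<and>
      (\<forall>p k. e k \<in> V (fst x) p \<longleftrightarrow> (p = 0 \<and> \<beta> k))" by (rule exE)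
  note e = ee[THEN conjunct1] ee[THEN conjunct2, THEN conjunct1] ee[THEN conjunct2, THEN conjunct2, THEN conjunct1]
     ee[THEN conjunct2, THEN conjunct2, THEN conjunct2]
  have satA: "sat (fst x) (e k) (Atom 0) = \<beta> k" for k using e(4) by simp
  have v0: "snd x \<in> V (fst x) 0 \<longleftrightarrow> \<beta> 0" using e(4)[rule_format, of 0 0] e(1) by simp
  have the: "(THE \<sigma>. \<sigma> \<in> Des S0 \<and> psat x (pre S0 \<sigma>)) = act \<beta> 0"
    using v0 by (rule_tac the_equality) (auto simp: S0_def psat_def act_def split: if_splits)
  define e' where "e' k = Upd (e k) (act \<beta> k)" for k
  have preok: "sat (fst x) (e k) (pre S0 (act \<beta> k))" for k
    using e(4) by (auto simp: S0_def act_def)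
  have actin: "act \<beta> k \<in> {0,1,2}" for k by (auto simp: act_def)
  show ?thesis unfolding rep_def
  proof (intro exI[of _ e'] conjI allI)
    show "e' 0 = snd (prod_update x S0)" by (simp add: prod_update_def the e'_def e(1))
    fix k
    show "e' k \<in> W (fst (prod_update x S0))"
      using e(2) preok[of k] actin[of k]
      by (auto simp: prod_update_def prod_model_def e'_def Let_def S0_def)
    fix i t
    show "(e' k, t) \<in> R (fst (prod_update x S0)) i \<longleftrightarrow> t = e' (Suc k)"
    proof
      assume "(e' k, t) \<in> R (fst (prod_update x S0)) i"
      then obtain \<tau> where t: "t = Upd (e (Suc k)) \<tau>" "\<tau> \<in> {0,1,2}"
          "sat (fst x) (e (Suc k)) (pre S0 \<tau>)" "(act \<beta> k, \<tau>) \<in> {(1,0),(1,1),(0,2),(2,2)}"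
        using e(3) by (auto simp: prod_update_def prod_model_def e'_def Let_def S0_def)
      then have "\<tau> = act \<beta> (Suc k)"
        using act_succ[of \<tau> \<beta> k] e(4) by (auto simp: S0_def split: if_splits)
      then show "t = e' (Suc k)" using t by (simp add: e'_def)
    next
      assume "t = e' (Suc k)"
      then show "(e' k, t) \<in> R (fst (prod_update x S0)) i"
        using e(2) e(3) preok actin act_succ[of "act \<beta> (Suc k)" \<beta> k]
        by (auto simp: prod_update_def prod_model_def e'_def Let_def S0_def)
    qed
  next
    fix p k
    show "e' k \<in> V (fst (prod_update x S0)) p \<longleftrightarrow> (p = 0 \<and> incr \<beta> k)"
      using e(2) e(4) preok[of k] actin[of k]
      by (auto simp: prod_update_def prod_model_def e'_def Let_def S0_def incr_def act_def
          ent1 ent2 ent3 ent4 ent5 ent6 split: if_splits)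
  qed
qed



lemma bit_incr: "bit (Suc n) k = (bit n k \<noteq> (\<forall>j<k. bit n j))"
proof (induction k arbitrary: n)
  case 0 then show ?case by (simp add: bit_0)
next
  case (Suc k)
  have eq: "(\<forall>j<Suc k. bit n j) = (odd n \<and> (\<forall>j<k. bit (n div 2) j))"
    by (auto simp: bit_0 bit_Suc less_Suc_eq_0_disj)
  show ?case
  proof (cases "even n")
    case True
    then have "Suc n div 2 = n div 2" by presburger
    then show ?thesis using True eq by (simp add: bit_Suc)
  next
    case False
    then have "Suc n div 2 = Suc (n div 2)" by presburger
    then show ?thesis using False eq Suc.IH[of "n div 2"] by (simp add: bit_Suc)
  qed
qed

definition x0 :: pmodel where
  "x0 = (\<lparr>W = range Base, R = (\<lambda>i. {(Base k, Base (Suc k)) | k. True}), V = (\<lambda>p. {})\<rparr>, Base 0)"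

definition xs :: "nat \<Rightarrow> pmodel" where
  "xs n = ((\<lambda>x. prod_update x S0) ^^ n) x0"

lemma xs_Suc: "xs (Suc n) = prod_update (xs n) S0"
  by (simp add: xs_def)

lemma rep_x0: "rep x0 (\<lambda>k. False)"
  unfolding rep_def x0_def by (intro exI[of _ Base]) auto

lemma rep_xs: "rep (xs n) (bit n)"
proof (induction n)
  case 0 then show ?case using rep_x0 by (simp add: xs_def)
next
  case (Suc n)
  have "incr (bit n) = bit (Suc n)" by (rule ext) (simp add: incr_def bit_incr)
  then show ?case using rep_step[OF Suc] by (simp add: xs_Suc)
qed

lemma ex1_S0: "\<exists>!\<sigma>. \<sigma> \<in> Des S0 \<and> psat x (pre S0 \<sigma>)"
proof (cases "psat x (Atom 0)")
  case True
  show ?thesis by (rule ex1I[of _ 1]) (use True in \<open>auto simp: S0_def psat_def\<close>)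
next
  case False
  show ?thesis by (rule ex1I[of _ 0]) (use False in \<open>auto simp: S0_def psat_def split: if_splits\<close>)
qed

lemma prod_wf: "wf_pmodel x \<Longrightarrow> \<sigma> \<in> Acts S \<Longrightarrow> sat (fst x) (snd x) (pre S \<sigma>) \<Longrightarrow>
    wf_pmodel (prod_model (fst x) S, Upd (snd x) \<sigma>)"
  unfolding wf_pmodel_def prod_model_def Let_def by auto

lemma wf_step: assumes "wf_pmodel x" shows "wf_pmodel (prod_update x S0)"
proof -
  define s0 where "s0 = (THE \<sigma>. \<sigma> \<in> Des S0 \<and> psat x (pre S0 \<sigma>))"
  have h: "s0 \<in> Des S0 \<and> psat x (pre S0 s0)" unfolding s0_def by (rule theI'[OF ex1_S0])
  have pu: "prod_update x S0 = (prod_model (fst x) S0, Upd (snd x) s0)"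
    by (simp add: prod_update_def s0_def)
  have inA: "s0 \<in> Acts S0" using h by (auto simp: S0_def)
  have sp: "sat (fst x) (snd x) (pre S0 s0)" using h by (simp add: psat_def)
  show ?thesis unfolding pu by (rule prod_wf[OF assms inA sp])
qed

lemma wf_xs: "wf_pmodel (xs n)"
proof (induction n)
  case 0 then show ?case by (auto simp: xs_def x0_def wf_pmodel_def)
next
  case (Suc n) then show ?case by (simp add: xs_Suc wf_step)
qed

fun boxes :: "nat \<Rightarrow> fm" where
  "boxes 0 = Atom 0"
| "boxes (Suc m) = Box 0 (boxes m)"

lemma wf_boxes: "wf_fm {0} {0} (boxes m)" by (induction m) auto

lemma chsat_boxes: "chsat \<beta> k (boxes m) = \<beta> (k + m)"
  by (induction m arbitrary: k) auto

lemma xs_inj: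
  assumes "\<forall>a. wf_fm {0} {0} a \<longrightarrow> (psat (xs n) a \<longleftrightarrow> psat (xs m) a)"
  shows "n = m"
proof -
  have "bit n k = bit m k" for k
    using assms wf_boxes[of k] rep_sat[OF rep_xs[of n], of "boxes k"] rep_sat[OF rep_xs[of m], of "boxes k"]
    by (simp add: chsat_boxes)
  then show ?thesis by (simp add: bit_eq_iff)
qed

abbreviation "XX \<equiv> range xs"

lemma cls_single: "cls {0} {0} XX (xs n) = {xs n}"
proof
  show "cls {0} {0} XX (xs n) \<subseteq> {xs n}"
  proof
    fix y assume "y \<in> cls {0} {0} XX (xs n)"
    then obtain m where "y = xs m" "\<forall>a. wf_fm {0} {0} a \<longrightarrow> (psat (xs m) a \<longleftrightarrow> psat (xs n) a)"
      unfolding cls_def by auto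
    then show "y \<in> {xs n}" using xs_inj by auto
  qed
qed (auto simp: cls_def)

abbreviation "ff \<equiv> clean_map {0} {0} XX S0"

lemma iter: "(ff ^^ n) (cls {0} {0} XX (xs 0)) = cls {0} {0} XX (xs n)"
proof (induction n)
  case (Suc n)
  then show ?case by (simp add: clean_map_def cls_single xs_Suc)
qed simp

fun dep :: "fm \<Rightarrow> nat" where
  "dep Top = 0" | "dep (Atom p) = 0" | "dep (Neg a) = dep a"
| "dep (Conj a b) = max (dep a) (dep b)" | "dep (Box i a) = Suc (dep a)"

lemma chsat_agree: "(\<forall>j \<le> dep a. \<beta> (k + j) = \<beta>' (k + j)) \<Longrightarrow> chsat \<beta> k a = chsat \<beta>' k a"
proof (induction a arbitrary: k)
  case (Atom p) then show ?case by (metis add_0_right chsat.simps(2) le0)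
next
  case (Box i a)
  have "\<forall>j \<le> dep a. \<beta> (Suc k + j) = \<beta>' (Suc k + j)" using Box.prems by fastforce
  then show ?case using Box.IH by simp
qed auto

lemma recur_ev:
  assumes "psat (xs 0) a"
  shows "eventually (\<lambda>j. psat (xs (2 ^ Suc j)) a) sequentially"
proof (rule eventually_sequentiallyI[of "dep a"])
  fix j assume j: "dep a \<le> j"
  have "chsat (bit ((2::nat) ^ Suc j)) 0 a = chsat (bit (0::nat)) 0 a"
  proof (rule chsat_agree, intro allI impI)
    fix i assume "i \<le> dep a"
    then have "i \<noteq> Suc j" using j by simp
    then have "\<not> bit ((2::nat) ^ Suc j) i" by (simp only: bit_exp_iff) simp
    then show "bit ((2::nat) ^ Suc j) (0 + i) = bit (0::nat) (0 + i)" by simp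
  qed
  then show "psat (xs (2 ^ Suc j)) a"
    using assms rep_sat[OF rep_xs] by simp
qed



theorem proposition11:
  shows "\<exists>(Phi::nat set) (I::nat set) (Lam::fm set) (X::pmodel set) (S::amodel).
     finite Phi \<and> finite I \<and> normal_logic Phi I Lam \<and> modal_space_of Phi I Lam X \<and>
     clean_action_model Phi I X S \<and> finite_am S \<and> boolean_am S \<and> \<not> static_am S \<and>
     (\<exists>x\<in>X.
        \<not> periodic_orbit (clean_map Phi I X S) (cls Phi I X x) \<and>
        (\<exists>y\<in>orbit (clean_map Phi I X S) (cls Phi I X x).
            recurrent (stone_top Phi I X) (clean_map Phi I X S) y))"
proof -
  have f1: "finite {0::nat}" by simp
  have nl: "normal_logic {0} {0} (Valid {0} {0})" by (rule normal_Valid)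
  have ms: "modal_space_of {0} {0} (Valid {0} {0}) XX"
    unfolding modal_space_of_def Valid_def using wf_xs by blast
  have lc1: "lit_conj {0} (Atom 0)" by (rule lit_conj.intros) simp
  have lc2: "lit_conj {0} (Neg (Atom 0))" by (rule lit_conj.intros) simp
  have cam: "clean_action_model {0} {0} XX S0"
    unfolding clean_action_model_def
  proof (intro conjI)
    show "wf_amodel {0} {0} S0"
      using lc1 lc2 by (auto simp: wf_amodel_def S0_def)
    show "precondition_finite S0" by (simp add: precondition_finite_def S0_def)
    show "exhaustive_deterministic XX S0"
      unfolding exhaustive_deterministic_def using ex1_S0 by blast
    show "closing XX S0" unfolding closing_def by (auto simp: xs_Suc[symmetric])
  qed
  have fa: "finite_am S0" by (simp add: finite_am_def S0_def)
  have ba: "boolean_am S0" by (simp add: boolean_am_def S0_def)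
  have nst: "\<not> static_am S0" by (simp add: static_am_def S0_def)
  have main: "\<exists>x\<in>XX. \<not> periodic_orbit ff (cls {0} {0} XX x) \<and>
        (\<exists>y\<in>orbit ff (cls {0} {0} XX x). recurrent (stone_top {0} {0} XX) ff y)"
  proof (intro bexI[of _ "xs 0"] conjI)
    show "xs 0 \<in> XX" by simp
    show "\<not> periodic_orbit ff (cls {0} {0} XX (xs 0))"
      unfolding periodic_orbit_def
    proof
      assume "\<exists>n k. 0 < k \<and> (ff ^^ (n + k)) (cls {0} {0} XX (xs 0)) = (ff ^^ n) (cls {0} {0} XX (xs 0))"
      then obtain n k where "0 < k" "(ff ^^ (n + k)) (cls {0} {0} XX (xs 0)) = (ff ^^ n) (cls {0} {0} XX (xs 0))" by blast
      then have "cls {0} {0} XX (xs (n + k)) = cls {0} {0} XX (xs n)" by (simp only: iter)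
      then have "{xs (n + k)} = {xs n}" by (simp only: cls_single)
      then have "xs (n + k) = xs n" by simp
      then have "n + k = n" using xs_inj by metis
      then show False using \<open>0 < k\<close> by simp
    qed
    show "\<exists>y\<in>orbit ff (cls {0} {0} XX (xs 0)). recurrent (stone_top {0} {0} XX) ff y"
    proof (intro bexI[of _ "cls {0} {0} XX (xs 0)"])
      show "cls {0} {0} XX (xs 0) \<in> orbit ff (cls {0} {0} XX (xs 0))"
        unfolding orbit_def by (rule CollectI, rule exI[of _ 0]) simp
      show "recurrent (stone_top {0} {0} XX) ff (cls {0} {0} XX (xs 0))"
        unfolding recurrent_def omega_limit_def stone_top_def
      proof (intro CollectI exI[of _ "\<lambda>j. 2 ^ Suc j"] conjI)
        show "strict_mono (\<lambda>j. (2::nat) ^ Suc j)" by (rule strict_monoI) simp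
        show "limitin (topology_generated_by
            {{cls {0} {0} XX x |x. x \<in> XX \<and> psat x a} |a. wf_fm {0} {0} a})
           (\<lambda>j. (ff ^^ 2 ^ Suc j) (cls {0} {0} XX (xs 0))) (cls {0} {0} XX (xs 0)) sequentially"
          unfolding iter
        proof (rule limitin_gen)
          show "cls {0} {0} XX (xs 0) \<in> \<Union> {{cls {0} {0} XX x |x. x \<in> XX \<and> psat x a} |a. wf_fm {0} {0} a}"
          proof (rule UnionI[of "{cls {0} {0} XX x |x. x \<in> XX \<and> psat x Top}"])
            show "{cls {0} {0} XX x |x. x \<in> XX \<and> psat x Top} \<in> {{cls {0} {0} XX x |x. x \<in> XX \<and> psat x a} |a. wf_fm {0} {0} a}"
              by (intro CollectI exI[of _ Top] conjI) simp_all
            show "cls {0} {0} XX (xs 0) \<in> {cls {0} {0} XX x |x. x \<in> XX \<and> psat x Top}"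
              by (intro CollectI exI[of _ "xs 0"] conjI) (simp_all add: psat_def)
          qed
          fix b assume "b \<in> {{cls {0} {0} XX x |x. x \<in> XX \<and> psat x a} |a. wf_fm {0} {0} a}"
            "cls {0} {0} XX (xs 0) \<in> b"
          then obtain a m where a: "wf_fm {0} {0} a" "b = {cls {0} {0} XX x |x. x \<in> XX \<and> psat x a}"
            "cls {0} {0} XX (xs 0) = cls {0} {0} XX (xs m)" "psat (xs m) a" by auto
          then have "xs 0 = xs m" by (simp add: cls_single)
          then have "psat (xs 0) a" using a by simp
          show "eventually (\<lambda>j. cls {0} {0} XX (xs (2 ^ Suc j)) \<in> b) sequentially"
          proof (rule eventually_mono[OF recur_ev[OF \<open>psat (xs 0) a\<close>]])
            fix j assume pj: "psat (xs (2 ^ Suc j)) a"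
            have "xs (2 ^ Suc j) \<in> XX" by (rule rangeI)
            then show "cls {0} {0} XX (xs (2 ^ Suc j)) \<in> b" unfolding a(2) using pj by blast
          qed
        qed
      qed
    qed
  qed
  show ?thesis
    apply (rule exI[of _ "{0::nat}"], rule exI[of _ "{0::nat}"], rule exI[of _ "Valid {0} {0}"],
        rule exI[of _ XX], rule exI[of _ S0])
    using f1 nl ms cam fa ba nst main by blast
qed

end
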